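(* Let $\Lambda,\Gamma$ be finite simplicial graphs and $f\colon V(\Lambda)\to V(\Gamma)$ a surjective map which is full (for all adjacent $u_1,u_2$ in $\Gamma$ and all $v_i\in f^{-1}(u_i)$, $v_1,v_2$ are adjacent in $\Lambda$) and satisfies condition $( * )$ (for all distinct non-adjacent $u\neq u'$ in $\Gamma$ and every $v\in f^{-1}(u)$ there is $v'\in f^{-1}(u')$ not adjacent to $v$). Suppose every fibre $f^{-1}(u)$ is a clique of $\Lambda$. Then the map sending each $u\in V(\Gamma)$ to the product of the elements of $f^{-1}(u)$ in $C(\Lambda)$ extends to an injective group homomorphism $\varphi\colon C(\Gamma)\hookrightarrow C(\Lambda)$, and $\varphi$ is a quasi-isometric embedding with respect to the word metrics given by the vertex generating sets.
   Context: For a finite simplicial graph $\Gamma$, the right-angled Coxeter group is $C(\Gamma)=\langle V(\Gamma)\mid v^2=1\ (v\in V(\Gamma)),\ [u,v]=1 \text{ iff }\{u,v\}\in E(\Gamma)\rangle$. A clique is a set of pairwise adjacent vertices. *)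

theory Defs
  imports Complex_Main "HOL-Algebra.Group"
begin

definition simple_graph :: "'a set \<Rightarrow> ('a \<Rightarrow> 'a \<Rightarrow> bool) \<Rightarrow> bool" where
  "simple_graph V E \<longleftrightarrow> finite V \<and>
     (\<forall>u v. E u v \<longrightarrow> u \<in> V \<and> v \<in> V \<and> u \<noteq> v \<and> E v u)"

definition is_clique :: "'a set \<Rightarrow> ('a \<Rightarrow> 'a \<Rightarrow> bool) \<Rightarrow> 'a set \<Rightarrow> bool" where
  "is_clique V E S \<longleftrightarrow> S \<subseteq> V \<and> (\<forall>u\<in>S. \<forall>v\<in>S. u \<noteq> v \<longrightarrow> E u v)"

inductive racg_step :: "'a set \<Rightarrow> ('a \<Rightarrow> 'a \<Rightarrow> bool) \<Rightarrow> 'a list \<Rightarrow> 'a list \<Rightarrow> bool"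
  for V E where
  cancel: "v \<in> V \<Longrightarrow> racg_step V E (xs @ v # v # ys) (xs @ ys)"
| swap: "u \<in> V \<Longrightarrow> v \<in> V \<Longrightarrow> E u v \<Longrightarrow> racg_step V E (xs @ u # v # ys) (xs @ v # u # ys)"

definition racg_rel :: "'a set \<Rightarrow> ('a \<Rightarrow> 'a \<Rightarrow> bool) \<Rightarrow> 'a list \<Rightarrow> 'a list \<Rightarrow> bool" where
  "racg_rel V E = equivclp (racg_step V E)"

definition racg_class :: "'a set \<Rightarrow> ('a \<Rightarrow> 'a \<Rightarrow> bool) \<Rightarrow> 'a list \<Rightarrow> 'a list set" where
  "racg_class V E w = {w'. w' \<in> lists V \<and> racg_rel V E w w'}"

definition RACG :: "'a set \<Rightarrow> ('a \<Rightarrow> 'a \<Rightarrow> bool) \<Rightarrow> 'a list set monoid" where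
  "RACG V E = \<lparr> carrier = racg_class V E ` lists V,
               mult = (\<lambda>A B. \<Union>{racg_class V E (x @ y) | x y. x \<in> A \<and> y \<in> B}),
               one = racg_class V E [] \<rparr>"

definition racg_gen :: "'a set \<Rightarrow> ('a \<Rightarrow> 'a \<Rightarrow> bool) \<Rightarrow> 'a \<Rightarrow> 'a list set" where
  "racg_gen V E v = racg_class V E [v]"

definition racg_dist :: "'a set \<Rightarrow> ('a \<Rightarrow> 'a \<Rightarrow> bool) \<Rightarrow> 'a list set \<Rightarrow> 'a list set \<Rightarrow> nat" where
  "racg_dist V E g h =
     (LEAST n. \<exists>w \<in> lists V. length w = n \<and> g \<otimes>\<^bsub>RACG V E\<^esub> racg_class V E w = h)"

definition fibre_word :: "('b \<Rightarrow> 'a) \<Rightarrow> 'b set \<Rightarrow> 'a \<Rightarrow> 'b list" where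
  "fibre_word f VL u = (SOME xs. distinct xs \<and> set xs = {v \<in> VL. f v = u})"

end

theory Submission
  imports Defs "HOL-Library.Multiset"
begin

definition dep :: "('a \<Rightarrow> 'a \<Rightarrow> bool) \<Rightarrow> 'a \<Rightarrow> 'a \<Rightarrow> bool" where
  "dep E s t \<longleftrightarrow> s = t \<or> \<not> E s t"

definition pile :: "('a \<Rightarrow> 'a \<Rightarrow> bool) \<Rightarrow> 'a list \<Rightarrow> 'a \<Rightarrow> bool list" where
  "pile E c t = map (\<lambda>x. x = t) (filter (dep E t) c)"

definition istop :: "('a \<Rightarrow> bool list) \<Rightarrow> 'a \<Rightarrow> bool" where
  "istop P s \<longleftrightarrow> P s \<noteq> [] \<and> last (P s)"

definition push :: "('a \<Rightarrow> 'a \<Rightarrow> bool) \<Rightarrow> ('a \<Rightarrow> bool list) \<Rightarrow> 'a \<Rightarrow> ('a \<Rightarrow> bool list)" where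
  "push E P s = (if istop P s then (\<lambda>t. if dep E s t then butlast (P t) else P t)
                 else (\<lambda>t. if dep E s t then P t @ [s = t] else P t))"

definition red :: "('a \<Rightarrow> 'a \<Rightarrow> bool) \<Rightarrow> 'a list \<Rightarrow> 'a \<Rightarrow> bool list" where
  "red E w = foldl (push E) (\<lambda>t. []) w"

fun ntt :: "bool list \<Rightarrow> bool" where
  "ntt [] = True"
| "ntt [x] = True"
| "ntt (x # y # r) = (\<not> (x \<and> y) \<and> ntt (y # r))"

lemma ntt_snoc: "ntt (l @ [x]) \<longleftrightarrow> ntt l \<and> \<not> (l \<noteq> [] \<and> last l \<and> x)"
  by (induction l rule: ntt.induct) auto

lemma ntt_butlast: "ntt l \<Longrightarrow> ntt (butlast l)"
  by (induction l rule: ntt.induct) (auto simp: butlast.simps split: list.splits)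

definition Inv :: "('a \<Rightarrow> 'a \<Rightarrow> bool) \<Rightarrow> ('a \<Rightarrow> bool list) \<Rightarrow> bool" where
  "Inv E P \<longleftrightarrow> (\<exists>c. P = pile E c) \<and> (\<forall>s. ntt (P s))"

lemma istop_pile_iff:
  "istop (pile E c) s \<longleftrightarrow> filter (dep E s) c \<noteq> [] \<and> last (filter (dep E s) c) = s"
  by (auto simp: istop_def pile_def last_map)

lemma istop_pileD:
  assumes "istop (pile E c) s"
  shows "\<exists>a b. c = a @ [s] @ b \<and> (\<forall>x\<in>set b. \<not> dep E s x)"
  using assms
proof (induction c rule: rev_induct)
  case Nil then show ?case by (simp add: istop_def pile_def)
next
  case (snoc x c)
  show ?case
  proof (cases "dep E s x")
    case True
    with snoc.prems have "x = s" by (simp add: istop_pile_iff)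
    then show ?thesis by (intro exI[of _ c] exI[of _ "[]"]) simp
  next
    case False
    with snoc.prems have "istop (pile E c) s" by (simp add: istop_pile_iff)
    with snoc.IH obtain a b where "c = a @ [s] @ b" "\<forall>x\<in>set b. \<not> dep E s x" by blast
    with False show ?thesis by (intro exI[of _ a] exI[of _ "b @ [x]"]) simp
  qed
qed

lemma dep_sym:
  assumes "symp E"
  shows "dep E s t = dep E t s"
  using assms by (auto simp: dep_def dest: sympD)

lemma dep_refl[simp]: "dep E s s"
  by (simp add: dep_def)

lemma pile_nil: "pile E [] = (\<lambda>t. [])"
  by (simp add: pile_def fun_eq_iff)

lemma push_nontop:
  assumes sym: "symp E"
    and "\<not> istop (pile E c) s"
  shows "push E (pile E c) s = pile E (c @ [s])"
  using assms(2) dep_sym[OF sym]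
  by (auto simp: push_def pile_def fun_eq_iff)

lemma all_false:
  assumes "\<forall>x\<in>set b. \<not> dep E s x" "t \<noteq> s" "dep E s t"
    and sym: "symp E"
  shows "map (\<lambda>x. x = t) (filter (dep E t) b) = replicate (length (filter (dep E t) b)) False"
proof -
  have "\<forall>x\<in>set (filter (dep E t) b). x \<noteq> t"
    using assms dep_sym[OF sym, of s t] by (auto simp: dep_def)
  then have "map (\<lambda>x. x = t) (filter (dep E t) b) = map (\<lambda>x. False) (filter (dep E t) b)"
    by (intro map_cong) auto
  then show ?thesis by (simp add: map_replicate_const)
qed

lemma pile_split_dep:
  assumes sym: "symp E"
    and b: "\<forall>x\<in>set b. \<not> dep E s x" and "dep E s t" and "t \<noteq> s"
  shows "pile E (a @ [s] @ b) t = pile E a t @ False # replicate (length (filter (dep E t) b)) False"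
    and "pile E (a @ b) t = pile E a t @ replicate (length (filter (dep E t) b)) False"
  using all_false[OF b assms(4) assms(3) sym] assms(3,4) dep_sym[OF sym, of s t]
  by (auto simp: pile_def)

lemma pile_split_self:
  assumes b: "\<forall>x\<in>set b. \<not> dep E s x"
  shows "pile E (a @ [s] @ b) s = pile E a s @ [True]"
    and "pile E (a @ b) s = pile E a s"
proof -
  have "filter (dep E s) b = []" using b by (simp add: filter_empty_conv)
  then show "pile E (a @ [s] @ b) s = pile E a s @ [True]" "pile E (a @ b) s = pile E a s"
    by (auto simp: pile_def)
qed

lemma pile_split_nodep:
  assumes sym: "symp E" and "\<not> dep E s t"
  shows "pile E (a @ [s] @ b) t = pile E (a @ b) t"
  using assms dep_sym[OF sym, of s t] by (auto simp: pile_def)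

lemma push_top:
  assumes sym: "symp E"
    and c: "c = a @ [s] @ b" and b: "\<forall>x\<in>set b. \<not> dep E s x"
  shows "push E (pile E c) s = pile E (a @ b)"
proof -
  have top: "istop (pile E c) s" using pile_split_self(1)[OF b] c by (simp add: istop_def)
  show ?thesis
  proof (rule ext)
    fix t
    show "push E (pile E c) s t = pile E (a @ b) t"
    proof (cases "dep E s t")
      case True
      show ?thesis
      proof (cases "t = s")
        case True
        then show ?thesis using top c pile_split_self[OF b] by (simp add: push_def)
      next
        case False
        have bl: "butlast (L @ False # replicate k False) = L @ replicate k False" for L k
        proof -
          have "L @ False # replicate k False = (L @ replicate k False) @ [False]"
            by (simp add: replicate_append_same[symmetric])
          then show ?thesis by (simp only: butlast_snoc)
        qed
        show ?thesis using top c pile_split_dep[OF sym b \<open>dep E s t\<close> False, of a] \<open>dep E s t\<close>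
          by (simp only: push_def if_True bl)
      qed
    next
      case False
      then show ?thesis using top c pile_split_nodep[OF sym False] by (simp add: push_def)
    qed
  qed
qed

lemma top_other:
  assumes sym: "symp E"
    and "istop (pile E c) s" "dep E s t" "t \<noteq> s"
  shows "pile E c t \<noteq> [] \<and> \<not> last (pile E c t)"
proof -
  obtain a b where c: "c = a @ [s] @ b" and b: "\<forall>x\<in>set b. \<not> dep E s x"
    using istop_pileD[OF assms(2)] by blast
  have "last (pile E a t @ False # replicate k False) = False" for k
    by (induction k) auto
  then show ?thesis using pile_split_dep(1)[OF sym b assms(3,4), of a] c by simp
qed

lemma push_apply: "push E P s t = (if dep E s t then (if istop P s then butlast (P t) else P t @ [s = t]) else P t)"
  unfolding push_def by (cases "istop P s") simp_all

lemma Inv_push: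
  assumes sym: "symp E" and inv: "Inv E P"
  shows "Inv E (push E P s)"
proof -
  obtain c where P: "P = pile E c" using inv unfolding Inv_def by blast
  have ntt: "\<And>t. ntt (P t)" using inv unfolding Inv_def by blast
  show ?thesis
  proof (cases "istop P s")
    case True
    then have "istop (pile E c) s" using P by simp
    then obtain a b where c: "c = a @ [s] @ b" and b: "\<forall>x\<in>set b. \<not> dep E s x"
      using istop_pileD[of E c s] by blast
    have "push E P s = pile E (a @ b)" using push_top[OF sym c b] P by simp
    moreover have "ntt (push E P s t)" for t
      using True ntt[of t] ntt_butlast by (simp add: push_apply)
    ultimately show ?thesis by (auto simp: Inv_def)
  next
    case False
    have "push E P s = pile E (c @ [s])" using push_nontop[OF sym] False P by simp
    moreover have "ntt (push E P s t)" for t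
    proof (cases "s = t")
      case True
      then show ?thesis using False ntt[of t] unfolding push_apply istop_def
        by (auto simp: ntt_snoc)
    next
      case False
      then show ?thesis using ntt[of t] \<open>\<not> istop P s\<close> by (simp add: push_apply ntt_snoc)
    qed
    ultimately show ?thesis by (auto simp: Inv_def)
  qed
qed

lemma push_push:
  assumes sym: "symp E" and inv: "Inv E P"
  shows "push E (push E P s) s = P"
proof -
  obtain c where P: "P = pile E c" using inv unfolding Inv_def by blast
  have ntt: "\<And>t. ntt (P t)" using inv unfolding Inv_def by blast
  show ?thesis
  proof (cases "istop P s")
    case True
    then obtain l where l: "P s = l @ [True]" unfolding istop_def
      by (metis append_butlast_last_id)
    have nl: "\<not> (l \<noteq> [] \<and> last l)" using ntt[of s] l by (simp add: ntt_snoc)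
    have ps: "push E P s s = l" using True l by (simp add: push_apply)
    have nt: "\<not> istop (push E P s) s" using nl ps unfolding istop_def by simp
    have oth: "P t \<noteq> [] \<and> \<not> last (P t)" if "dep E s t" "t \<noteq> s" for t
    proof -
      have "istop (pile E c) s" using True P by simp
      then have "pile E c t \<noteq> [] \<and> \<not> last (pile E c t)" using top_other[OF sym _ that] by blast
      then show ?thesis using P by simp
    qed
    show ?thesis
    proof (rule ext)
      fix t
      show "push E (push E P s) s t = P t"
      proof (cases "dep E s t")
        case True
        show ?thesis
        proof (cases "t = s")
          case True then show ?thesis using nt ps l by (simp add: push_apply)
        next
          case False
          then have "butlast (P t) @ [False] = P t" using oth[OF \<open>dep E s t\<close> False]
            by (metis append_butlast_last_id)
          then show ?thesis using nt \<open>istop P s\<close> \<open>dep E s t\<close> False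
            by (simp add: push_apply)
        qed
      next
        case False
        then show ?thesis by (simp add: push_apply)
      qed
    qed
  next
    case False
    have ps: "push E P s s = P s @ [True]" using False by (simp add: push_apply)
    have t: "istop (push E P s) s" using ps unfolding istop_def by simp
    show ?thesis
    proof (rule ext)
      fix t
      show "push E (push E P s) s t = P t"
        using t False by (simp add: push_apply)
    qed
  qed
qed

lemma push_comm:
  assumes sym: "symp E" and inv: "Inv E P" and uv: "E u v"
  shows "push E (push E P v) u = push E (push E P u) v"
proof (cases "u = v")
  case True then show ?thesis by simp
next
  case False
  obtain c where P: "P = pile E c" using inv unfolding Inv_def by blast
  have nd: "\<not> dep E u v" "\<not> dep E v u" using uv False sym by (auto simp: dep_def dest: sympD)
  have su: "push E P v u = P u" using nd by (simp add: push_apply)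
  have sv: "push E P u v = P v" using nd by (simp add: push_apply)
  have tu: "istop (push E P v) u = istop P u" using su by (simp add: istop_def)
  have tv: "istop (push E P u) v = istop P v" using sv by (simp add: istop_def)
  have othu: "P t \<noteq> [] \<and> \<not> last (P t)" if "istop P u" "dep E u t" "t \<noteq> u" for t
    using top_other[OF sym, of c u t] that unfolding P by blast
  have othv: "P t \<noteq> [] \<and> \<not> last (P t)" if "istop P v" "dep E v t" "t \<noteq> v" for t
    using top_other[OF sym, of c v t] that unfolding P by blast
  have bl: "butlast (L @ [x]) = L" for L and x :: bool by simp
  have bl2: "L \<noteq> [] \<Longrightarrow> \<not> last L \<Longrightarrow> butlast L @ [False] = L" for L
    by (metis append_butlast_last_id)
  show ?thesis
  proof (rule ext)
    fix t
    have "dep E v t \<Longrightarrow> t \<noteq> u" "dep E u t \<Longrightarrow> t \<noteq> v" using nd by auto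
    then show "push E (push E P v) u t = push E (push E P u) v t"
      using othu[of t] othv[of t] bl2[of "P t"]
      by (cases "istop P u"; cases "istop P v"; cases "dep E u t"; cases "dep E v t";
          simp only: push_apply tu tv if_True if_False butlast_snoc; simp)
  qed
qed

lemma Inv_red: "symp E \<Longrightarrow> Inv E (red E w)"
proof (induction w rule: rev_induct)
  case Nil
  then show ?case by (auto simp: red_def Inv_def pile_nil[symmetric] intro: exI[of _ "[]"])
next
  case (snoc x xs)
  then show ?case using Inv_push by (simp add: red_def)
qed

lemma red_step:
  assumes sym: "symp E" and "racg_step V E w w'"
  shows "red E w = red E w'"
  using assms(2)
proof cases
  case (cancel v xs ys)
  then show ?thesis using push_push[OF sym Inv_red[OF sym, of xs]] by (simp add: red_def)
next
  case (swap u v xs ys)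
  then show ?thesis using push_comm[OF sym Inv_red[OF sym, of xs], of u v] by (simp add: red_def)
qed

lemma red_rel:
  assumes sym: "symp E" and "racg_rel V E w w'"
  shows "red E w = red E w'"
  using assms(2) unfolding racg_rel_def
proof (induction rule: equivclp_induct)
  case base then show ?case by simp
next
  case (step y z)
  then show ?case using red_step[OF sym, of V y z] red_step[OF sym, of V z y] by auto
qed

lemma red_short:
  assumes sym: "symp E"
  shows "\<exists>c. red E w = pile E c \<and> length c \<le> length w"
proof (induction w rule: rev_induct)
  case Nil then show ?case by (auto simp: red_def pile_nil intro: exI[of _ "[]"])
next
  case (snoc x w)
  then obtain c where c: "red E w = pile E c" "length c \<le> length w" by blast
  have r: "red E (w @ [x]) = push E (pile E c) x" using c by (simp add: red_def)
  show ?case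
  proof (cases "istop (pile E c) x")
    case True
    then obtain a b where "c = a @ [x] @ b" "\<forall>y\<in>set b. \<not> dep E x y" using istop_pileD[of E c x] by blast
    then show ?thesis using push_top[OF sym] r c
      by (intro exI[of _ "a @ b"]) auto
  next
    case False
    then show ?thesis using push_nontop[OF sym] r c
      by (intro exI[of _ "c @ [x]"]) auto
  qed
qed

lemma pile_length:
  assumes "pile E c = pile E d"
  shows "length c = length d"
proof -
  have cnt: "length (filter id (pile E c t)) = count_list c t" for c t
  proof -
    have "length (filter id (pile E c t)) = length (filter (\<lambda>x. x = t) (filter (dep E t) c))"
      by (simp add: pile_def filter_map comp_def)
    also have "filter (\<lambda>x. x = t) (filter (dep E t) c) = filter (\<lambda>x. x = t) c"
      by (auto simp: filter_filter intro: filter_cong)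
    also have "length (filter (\<lambda>x. x = t) c) = count_list c t"
      by (simp add: count_list_eq_length_filter) (metis (mono_tags) filter_cong)
    finally show ?thesis .
  qed
  have "mset c = mset d"
    by (rule multiset_eqI) (metis cnt assms count_mset)
  then show ?thesis by (metis size_mset)
qed

fun ppr :: "('a \<Rightarrow> 'a \<Rightarrow> bool) \<Rightarrow> 'a list \<Rightarrow> bool" where
  "ppr E [] = True"
| "ppr E (s # r) = (ppr E r \<and> \<not> istop (pile E (rev r)) s)"

definition pp :: "('a \<Rightarrow> 'a \<Rightarrow> bool) \<Rightarrow> 'a list \<Rightarrow> bool" where
  "pp E w = ppr E (rev w)"

lemma pp_nil[simp]: "pp E []" by (simp add: pp_def)

lemma pp_snoc: "pp E (w @ [s]) \<longleftrightarrow> pp E w \<and> \<not> istop (pile E w) s"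
  by (simp add: pp_def)

lemma pp_red: "symp E \<Longrightarrow> pp E w \<Longrightarrow> red E w = pile E w"
proof (induction w rule: rev_induct)
  case Nil then show ?case by (simp add: red_def pile_nil)
next
  case (snoc x w)
  then have "red E w = pile E w" "\<not> istop (pile E w) x" by (auto simp: pp_snoc)
  then show ?case using push_nontop[OF snoc.prems(1)] by (simp add: red_def)
qed

lemma not_pp: "\<not> pp E c \<Longrightarrow> \<exists>a s b. c = a @ s # b \<and> istop (pile E a) s"
proof (induction c rule: rev_induct)
  case Nil then show ?case by simp
next
  case (snoc x c)
  show ?case
  proof (cases "pp E c")
    case True
    then show ?thesis using snoc.prems by (auto simp: pp_snoc intro: exI[of _ "[]"])
  next
    case False
    then obtain a s b where "c = a @ s # b" "istop (pile E a) s" using snoc.IH by blast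
    then show ?thesis by (intro exI[of _ a] exI[of _ s] exI[of _ "b @ [x]"]) simp
  qed
qed

lemma length_LB:
  assumes sym: "symp E" and "racg_rel V E w d" and "pp E d"
  shows "length d \<le> length w"
proof -
  obtain c where c: "red E w = pile E c" "length c \<le> length w" using red_short[OF sym] by blast
  have "red E w = pile E d" using red_rel[OF sym assms(2)] pp_red[OF sym assms(3)] by simp
  then show ?thesis using c pile_length by metis
qed

lemma step_ctx: "racg_step V E x y \<Longrightarrow> racg_step V E (p @ x @ q) (p @ y @ q)"
proof (induction rule: racg_step.induct)
  case (cancel v xs ys)
  then show ?case using racg_step.cancel[where xs="p @ xs" and ys="ys @ q"] by simp
next
  case (swap u v xs ys)
  then show ?case using racg_step.swap[where xs="p @ xs" and ys="ys @ q"] by simp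
qed

lemma equivclp_map:
  assumes "\<And>x y. r x y \<Longrightarrow> r (g x) (g y)" and "equivclp r x y"
  shows "equivclp r (g x) (g y)"
  using assms(2)
proof (induction rule: equivclp_induct)
  case base then show ?case by simp
next
  case (step y z) then show ?case using assms(1) by (meson equivclp_into_equivclp)
qed

lemma rel_ctx: "racg_rel V E x y \<Longrightarrow> racg_rel V E (p @ x @ q) (p @ y @ q)"
  unfolding racg_rel_def
  by (rule equivclp_map[where g="\<lambda>w. p @ w @ q"]) (auto intro: step_ctx)

lemma rel_refl[simp]: "racg_rel V E x x"
  by (simp add: racg_rel_def)

lemma rel_sym: "racg_rel V E x y \<Longrightarrow> racg_rel V E y x"
  unfolding racg_rel_def by (rule equivclp_sym)

lemma rel_trans: "racg_rel V E x y \<Longrightarrow> racg_rel V E y z \<Longrightarrow> racg_rel V E x z"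
  unfolding racg_rel_def by (rule equivclp_trans)

lemma rel_app: "racg_rel V E a a' \<Longrightarrow> racg_rel V E b b' \<Longrightarrow> racg_rel V E (a @ b) (a' @ b')"
  using rel_ctx[of V E a a' "[]" b] rel_ctx[of V E b b' a' "[]"] rel_trans[of V E "a @ b" "a' @ b" "a' @ b'"]
  by simp

lemma rel_cancel: "v \<in> V \<Longrightarrow> racg_rel V E (xs @ v # v # ys) (xs @ ys)"
  unfolding racg_rel_def by (rule r_into_equivclp) (rule racg_step.cancel)

lemma rel_swap: "u \<in> V \<Longrightarrow> v \<in> V \<Longrightarrow> E u v \<Longrightarrow> racg_rel V E (xs @ u # v # ys) (xs @ v # u # ys)"
  unfolding racg_rel_def by (rule r_into_equivclp) (rule racg_step.swap)

lemma rel_comm: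
  "s \<in> V \<Longrightarrow> set l \<subseteq> V \<Longrightarrow> \<forall>x\<in>set l. E s x \<Longrightarrow> racg_rel V E (s # l) (l @ [s])"
proof (induction l)
  case Nil then show ?case by simp
next
  case (Cons x l)
  have 1: "racg_rel V E (s # x # l) (x # s # l)"
    using rel_swap[of s V x E "[]" l] Cons.prems by simp
  have 2: "racg_rel V E (x # s # l) (x # (l @ [s]))"
    using rel_ctx[OF Cons.IH, of "[x]" "[]"] Cons.prems by simp
  show ?case using rel_trans[OF 1 2] by simp
qed

lemma rel_block:
  "set l1 \<subseteq> V \<Longrightarrow> set l2 \<subseteq> V \<Longrightarrow> \<forall>x\<in>set l1. \<forall>y\<in>set l2. E x y
   \<Longrightarrow> racg_rel V E (l1 @ l2) (l2 @ l1)"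
proof (induction l1)
  case Nil then show ?case by simp
next
  case (Cons x l1)
  have 1: "racg_rel V E (x # (l1 @ l2)) (x # (l2 @ l1))"
    using rel_ctx[OF Cons.IH, of "[x]" "[]"] Cons.prems by simp
  have 2: "racg_rel V E ((x # l2) @ l1) ((l2 @ [x]) @ l1)"
    using rel_ctx[OF rel_comm[of x V l2 E], of "[]" l1] Cons.prems by simp
  show ?case using rel_trans[OF 1] 2 by simp
qed

lemma rel_clique:
  "distinct l \<Longrightarrow> set l \<subseteq> V \<Longrightarrow> \<forall>x\<in>set l. \<forall>y\<in>set l. x \<noteq> y \<longrightarrow> E x y
   \<Longrightarrow> racg_rel V E (l @ l) []"
proof (induction l)
  case Nil then show ?case by simp
next
  case (Cons x l)
  have "\<forall>y\<in>set l. E x y" using Cons.prems by auto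
  then have c: "racg_rel V E (l @ [x]) (x # l)"
    using rel_sym[OF rel_comm[of x V l E]] Cons.prems by auto
  have 1: "racg_rel V E (x # l @ x # l) (x # x # l @ l)"
    using rel_ctx[OF c, of "[x]" l] by simp
  have 2: "racg_rel V E (x # x # l @ l) (l @ l)"
    using rel_cancel[of x V E "[]" "l @ l"] Cons.prems by simp
  have 3: "racg_rel V E (l @ l) []" using Cons by auto
  show ?case using rel_trans[OF rel_trans[OF 1 2] 3] by simp
qed

lemma rel_inv: "set a \<subseteq> V \<Longrightarrow> racg_rel V E (a @ rev a) []"
proof (induction a)
  case Nil then show ?case by simp
next
  case (Cons x a)
  have 1: "racg_rel V E (x # a @ rev a @ [x]) [x, x]"
    using rel_ctx[OF Cons.IH, of "[x]" "[x]"] Cons.prems by simp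
  have 2: "racg_rel V E [x, x] []"
    using rel_cancel[of x V E "[]" "[]"] Cons.prems by simp
  show ?case using rel_trans[OF 1 2] by simp
qed

lemma rel_cancel_gap:
  assumes "s \<in> V" "set a2 \<subseteq> V" "\<forall>x\<in>set a2. E s x"
  shows "racg_rel V E (a1 @ [s] @ a2 @ s # b) (a1 @ a2 @ b)"
proof -
  have 1: "racg_rel V E (a1 @ (s # a2) @ (s # b)) (a1 @ (a2 @ [s]) @ (s # b))"
    using rel_ctx[OF rel_comm[of s V a2 E, OF assms]] by blast
  have 2: "racg_rel V E ((a1 @ a2) @ s # s # b) ((a1 @ a2) @ b)"
    using rel_cancel[OF assms(1)] by blast
  show ?thesis using rel_trans[OF 1] 2 by simp
qed

lemma cls_eq: "racg_rel V E x y \<Longrightarrow> racg_class V E x = racg_class V E y"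
proof -
  assume a: "racg_rel V E x y"
  have "racg_rel V E x w \<longleftrightarrow> racg_rel V E y w" for w
    using rel_trans[OF rel_sym[OF a], of w] rel_trans[OF a, of w] by blast
  then show ?thesis unfolding racg_class_def by simp
qed

lemma in_cls: "x \<in> lists V \<Longrightarrow> x \<in> racg_class V E x"
  by (simp add: racg_class_def)

lemma cls_eq_iff: "x \<in> lists V \<Longrightarrow> racg_class V E x = racg_class V E y \<longleftrightarrow> racg_rel V E x y"
proof
  assume "x \<in> lists V" "racg_class V E x = racg_class V E y"
  then have "x \<in> racg_class V E y" using in_cls by metis
  then show "racg_rel V E x y" by (simp add: racg_class_def rel_sym)
qed (rule cls_eq)

lemma mult_cls:
  assumes "a \<in> lists V" "b \<in> lists V"
  shows "racg_class V E a \<otimes>\<^bsub>RACG V E\<^esub> racg_class V E b = racg_class V E (a @ b)"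
proof -
  have "{racg_class V E (x @ y) | x y. x \<in> racg_class V E a \<and> y \<in> racg_class V E b}
        = {racg_class V E (a @ b)}"
  proof (intro equalityI subsetI)
    fix X assume "X \<in> {racg_class V E (x @ y) | x y. x \<in> racg_class V E a \<and> y \<in> racg_class V E b}"
    then obtain x y where X: "X = racg_class V E (x @ y)" and x: "x \<in> racg_class V E a"
      and y: "y \<in> racg_class V E b"
      by blast
    have "racg_rel V E a x" "racg_rel V E b y" using x y by (simp_all add: racg_class_def)
    then have "racg_rel V E (a @ b) (x @ y)" by (rule rel_app)
    then have "racg_class V E (x @ y) = racg_class V E (a @ b)" using cls_eq[OF rel_sym] by blast
    then show "X \<in> {racg_class V E (a @ b)}" using X by simp
  next
    fix X assume "X \<in> {racg_class V E (a @ b)}"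
    then show "X \<in> {racg_class V E (x @ y) | x y. x \<in> racg_class V E a \<and> y \<in> racg_class V E b}"
      using in_cls[OF assms(1), of E] in_cls[OF assms(2), of E] by auto
  qed
  then show ?thesis by (simp add: RACG_def)
qed

lemma carrier_RACG: "carrier (RACG V E) = racg_class V E ` lists V"
  by (simp add: RACG_def)

lemma dist_le:
  assumes "w \<in> lists V" "racg_rel V E (a @ w) b" "a \<in> lists V" "b \<in> lists V"
  shows "racg_dist V E (racg_class V E a) (racg_class V E b) \<le> length w"
proof -
  have "racg_class V E a \<otimes>\<^bsub>RACG V E\<^esub> racg_class V E w = racg_class V E b"
    using mult_cls[OF assms(3,1)] cls_eq[OF assms(2)] by simp
  then show ?thesis unfolding racg_dist_def using assms(1) by (intro Least_le) blast
qed

lemma dist_wit: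
  assumes "a \<in> lists V" "b \<in> lists V"
  shows "\<exists>w\<in>lists V. length w = racg_dist V E (racg_class V E a) (racg_class V E b)
                     \<and> racg_rel V E (a @ w) b"
proof -
  let ?P = "\<lambda>n. \<exists>w \<in> lists V. length w = n \<and>
              racg_class V E a \<otimes>\<^bsub>RACG V E\<^esub> racg_class V E w = racg_class V E b"
  have r: "racg_rel V E (a @ rev a @ b) b"
    using rel_app[OF rel_inv[of a V E] rel_refl[of V E b]] assms by auto
  have "rev a \<in> lists V" using assms by auto
  then have "?P (length (rev a @ b))"
    using mult_cls[of a V "rev a @ b" E] assms cls_eq[OF r] by (intro bexI[of _ "rev a @ b"]) auto
  then have "?P (LEAST n. ?P n)" by (rule LeastI)
  then obtain w where w: "w \<in> lists V" "length w = (LEAST n. ?P n)"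
     "racg_class V E a \<otimes>\<^bsub>RACG V E\<^esub> racg_class V E w = racg_class V E b" by blast
  then have "racg_class V E (a @ w) = racg_class V E b" using mult_cls[OF assms(1) w(1)] by simp
  then have "racg_rel V E (a @ w) b" using cls_eq_iff[of "a @ w" V E b] assms w by simp
  moreover have "length w = racg_dist V E (racg_class V E a) (racg_class V E b)"
    using w(2) unfolding racg_dist_def by simp
  ultimately show ?thesis using w(1) by blast
qed

definition Phi :: "('b \<Rightarrow> 'a) \<Rightarrow> 'b set \<Rightarrow> 'a list \<Rightarrow> 'b list" where
  "Phi f VL w = concat (map (fibre_word f VL) w)"

lemma Phi_append[simp]: "Phi f VL (a @ b) = Phi f VL a @ Phi f VL b"
  by (simp add: Phi_def)

lemma Phi_Nil[simp]: "Phi f VL [] = []"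
  by (simp add: Phi_def)

lemma Phi_Cons: "Phi f VL (x # a) = fibre_word f VL x @ Phi f VL a"
  by (simp add: Phi_def)

context
  fixes VL :: "'b set" and EL :: "'b \<Rightarrow> 'b \<Rightarrow> bool"
    and VG :: "'a set" and EG :: "'a \<Rightarrow> 'a \<Rightarrow> bool"
    and f :: "'b \<Rightarrow> 'a"
  assumes gL: "simple_graph VL EL" and gG: "simple_graph VG EG"
    and surj: "f ` VL = VG"
    and full: "\<forall>u1 u2. EG u1 u2 \<longrightarrow>
                 (\<forall>v1\<in>VL. \<forall>v2\<in>VL. f v1 = u1 \<longrightarrow> f v2 = u2 \<longrightarrow> EL v1 v2)"
    and star: "\<forall>u\<in>VG. \<forall>u'\<in>VG. u \<noteq> u' \<and> \<not> EG u u' \<longrightarrow>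
                 (\<forall>v\<in>VL. f v = u \<longrightarrow> (\<exists>v'\<in>VL. f v' = u' \<and> \<not> EL v v'))"
    and cliques: "\<forall>u\<in>VG. is_clique VL EL {v \<in> VL. f v = u}"
begin

lemma finL: "finite VL" using gL by (simp add: simple_graph_def)

lemma symL: "symp EL" using gL by (auto simp: simple_graph_def intro: sympI)
lemma symG: "symp EG" using gG by (auto simp: simple_graph_def intro: sympI)

lemma fw: "distinct (fibre_word f VL u) \<and> set (fibre_word f VL u) = {v \<in> VL. f v = u}"
proof -
  have "finite {v \<in> VL. f v = u}" using finL by simp
  then have "\<exists>xs. distinct xs \<and> set xs = {v \<in> VL. f v = u}"
    using finite_distinct_list by blast
  then show ?thesis unfolding fibre_word_def by (rule someI_ex)
qed

lemma fw_set: "v \<in> set (fibre_word f VL u) \<longleftrightarrow> v \<in> VL \<and> f v = u"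
  using fw by blast

lemma Phi_lists: "Phi f VL w \<in> lists VL"
  by (auto simp: Phi_def fw_set)

lemma fw_ne: "u \<in> VG \<Longrightarrow> fibre_word f VL u \<noteq> []"
  using surj fw_set by (metis empty_iff image_iff list.set(1))

lemma fw_len: "length (fibre_word f VL u) \<le> card VL"
proof -
  have "length (fibre_word f VL u) = card (set (fibre_word f VL u))"
    using distinct_card[of "fibre_word f VL u"] fw[of u] by simp
  also have "\<dots> \<le> card VL" using finL by (intro card_mono) (auto simp: fw_set)
  finally show ?thesis .
qed

lemma Phi_len: "w \<in> lists VG \<Longrightarrow> length w \<le> length (Phi f VL w) \<and> length (Phi f VL w) \<le> card VL * length w"
proof (induction w)
  case Nil then show ?case by simp
next
  case (Cons x w)
  have "1 \<le> length (fibre_word f VL x)" using fw_ne Cons.prems by (simp add: Suc_le_eq)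
  then show ?case using Cons fw_len[of x] by (simp add: Phi_Cons)
qed

lemma Phi_step: "racg_step VG EG x y \<Longrightarrow> racg_rel VL EL (Phi f VL x) (Phi f VL y)"
proof (induction rule: racg_step.induct)
  case (cancel v xs ys)
  let ?l = "fibre_word f VL v"
  have "\<forall>x\<in>set ?l. \<forall>y\<in>set ?l. x \<noteq> y \<longrightarrow> EL x y"
    using cliques cancel fw_set by (auto simp: is_clique_def)
  then have "racg_rel VL EL (?l @ ?l) []"
    using rel_clique[of ?l VL EL] fw fw_set by auto
  then show ?case using rel_ctx[of VL EL "?l @ ?l" "[]" "Phi f VL xs" "Phi f VL ys"]
    by (simp add: Phi_Cons)
next
  case (swap u v xs ys)
  let ?l1 = "fibre_word f VL u" and ?l2 = "fibre_word f VL v"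
  have "\<forall>x\<in>set ?l1. \<forall>y\<in>set ?l2. EL x y"
    using full swap fw_set by auto
  then have "racg_rel VL EL (?l1 @ ?l2) (?l2 @ ?l1)"
    using rel_block[of ?l1 VL ?l2 EL] fw_set by auto
  then show ?case using rel_ctx[of VL EL "?l1 @ ?l2" "?l2 @ ?l1" "Phi f VL xs" "Phi f VL ys"]
    by (simp add: Phi_Cons)
qed

lemma Phi_rel: "racg_rel VG EG x y \<Longrightarrow> racg_rel VL EL (Phi f VL x) (Phi f VL y)"
  unfolding racg_rel_def[of VG EG]
proof (induction rule: equivclp_induct)
  case base then show ?case by simp
next
  case (step y z)
  then show ?case using Phi_step rel_trans rel_sym by metis
qed

lemma core:
  assumes "a \<in> lists VG" "u \<in> VG" "v \<in> VL" "f v = u" "\<not> istop (pile EG a) u"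
  shows "\<not> istop (pile EL (Phi f VL a)) v"
  using assms(1,5)
proof (induction a rule: rev_induct)
  case Nil then show ?case by (simp add: istop_def pile_def)
next
  case (snoc x a)
  have xV: "x \<in> VG" using snoc.prems by simp
  show ?case
  proof (cases "dep EG u x")
    case True
    then have "x \<noteq> u" using snoc.prems(2) by (simp add: istop_pile_iff)
    then have "\<not> EG u x" using True by (simp add: dep_def)
    then obtain v' where v': "v' \<in> VL" "f v' = x" "\<not> EL v v'"
      using star assms(2,3,4) xV \<open>x \<noteq> u\<close> by metis
    have "v' \<in> set (filter (dep EL v) (fibre_word f VL x))"
      using v' fw_set by (simp add: dep_def)
    then have ne: "filter (dep EL v) (fibre_word f VL x) \<noteq> []"
      by (cases "filter (dep EL v) (fibre_word f VL x)") auto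
    have "last (filter (dep EL v) (fibre_word f VL x)) \<in> set (filter (dep EL v) (fibre_word f VL x))"
      by (rule last_in_set[OF ne])
    then have "last (filter (dep EL v) (fibre_word f VL x)) \<in> set (fibre_word f VL x)"
      by simp
    then have "f (last (filter (dep EL v) (fibre_word f VL x))) = x" using fw_set by blast
    then have "last (filter (dep EL v) (fibre_word f VL x)) \<noteq> v"
      using assms(4) \<open>x \<noteq> u\<close> by auto
    then show ?thesis using ne by (simp add: istop_pile_iff Phi_Cons)
  next
    case False
    then have "x \<noteq> u" "EG u x" by (auto simp: dep_def)
    have "filter (dep EL v) (fibre_word f VL x) = []"
    proof (rule filter_False, intro ballI)
      fix y assume y: "y \<in> set (fibre_word f VL x)"
      have yy: "y \<in> VL" "f y = x" using y fw_set by auto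
      have "EL v y" using full \<open>EG u x\<close> assms(3,4) yy by blast
      moreover have "y \<noteq> v" using yy assms(4) \<open>x \<noteq> u\<close> by auto
      ultimately show "\<not> dep EL v y" by (auto simp: dep_def)
    qed
    moreover have nt: "\<not> istop (pile EG a) u"
      using snoc.prems(2) False by (simp add: istop_pile_iff)
    have "\<not> istop (pile EL (Phi f VL a)) v" using snoc.IH[OF _ nt] snoc.prems(1) by simp
    ultimately show ?thesis by (simp add: istop_pile_iff Phi_Cons)
  qed
qed

lemma pp_Phi: "c \<in> lists VG \<Longrightarrow> pp EG c \<Longrightarrow> pp EL (Phi f VL c)"
proof (induction c rule: rev_induct)
  case Nil then show ?case by simp
next
  case (snoc u c)
  have u: "u \<in> VG" and c: "c \<in> lists VG" using snoc.prems by auto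
  have ntop: "\<not> istop (pile EG c) u" and ppc: "pp EG c" using snoc.prems by (auto simp: pp_snoc)
  have main: "\<forall>r. l @ r = fibre_word f VL u \<longrightarrow> pp EL (Phi f VL c @ l)" for l
  proof (induction l rule: rev_induct)
    case Nil then show ?case using snoc.IH c ppc by simp
  next
    case (snoc v l)
    show ?case
    proof (intro allI impI)
      fix r assume lr: "(l @ [v]) @ r = fibre_word f VL u"
      then have ppl: "pp EL (Phi f VL c @ l)" using snoc.IH[rule_format, of "v # r"] by simp
      have sets: "set (fibre_word f VL u) = set l \<union> {v} \<union> set r" using lr[symmetric] by auto
      have vin: "v \<in> VL" "f v = u" using sets fw_set[of v u] by auto
      have "filter (dep EL v) l = []"
      proof (rule filter_False, intro ballI)
        fix y assume y: "y \<in> set l"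
        have dist: "distinct (l @ [v] @ r)" using lr fw by simp
        then have "y \<noteq> v" using y by auto
        moreover have "y \<in> VL" "f y = u" using y sets fw_set[of y u] by auto
        ultimately have "EL v y" using cliques u vin by (auto simp: is_clique_def)
        then show "\<not> dep EL v y" using \<open>y \<noteq> v\<close> by (simp add: dep_def)
      qed
      then have "istop (pile EL (Phi f VL c @ l)) v = istop (pile EL (Phi f VL c)) v"
        by (simp add: istop_pile_iff)
      moreover have "\<not> istop (pile EL (Phi f VL c)) v" using core[OF c u vin ntop] .
      ultimately show "pp EL (Phi f VL c @ l @ [v])"
        using ppl by (simp add: pp_snoc[of EL "Phi f VL c @ l", simplified])
    qed
  qed
  show ?case using main[of "fibre_word f VL u"] by (simp add: Phi_def)
qed

lemma min_pp:
  assumes x: "x \<in> lists VG"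
  shows "\<exists>c\<in>lists VG. racg_rel VG EG x c \<and> pp EG c"
proof -
  obtain c where c: "c \<in> lists VG \<and> racg_rel VG EG x c"
    and min: "\<forall>d. d \<in> lists VG \<and> racg_rel VG EG x d \<longrightarrow> length c \<le> length d"
    using ex_has_least_nat[of "\<lambda>c. c \<in> lists VG \<and> racg_rel VG EG x c" x length] x by auto
  have "pp EG c"
  proof (rule ccontr)
    assume "\<not> pp EG c"
    then obtain a s b where cs: "c = a @ s # b" and t: "istop (pile EG a) s"
      using not_pp by blast
    obtain a1 a2 where a: "a = a1 @ [s] @ a2" and a2: "\<forall>y\<in>set a2. \<not> dep EG s y"
      using istop_pileD[OF t] by blast
    have sV: "s \<in> VG" and a2V: "set a2 \<subseteq> VG" using c cs a by auto
    have a2E: "\<forall>y\<in>set a2. EG s y" using a2 by (auto simp: dep_def)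
    have "racg_rel VG EG c (a1 @ a2 @ b)"
      using rel_cancel_gap[of s VG a2 EG a1 b, OF sV a2V a2E] cs a by simp
    then have "racg_rel VG EG x (a1 @ a2 @ b)" using c rel_trans by blast
    moreover have "a1 @ a2 @ b \<in> lists VG" using c cs a by auto
    ultimately have "length c \<le> length (a1 @ a2 @ b)" using min by blast
    then show False using cs a by simp
  qed
  then show ?thesis using c by blast
qed


lemma dist_upper:
  assumes a: "a \<in> lists VG" and b: "b \<in> lists VG"
  shows "racg_dist VL EL (racg_class VL EL (Phi f VL a)) (racg_class VL EL (Phi f VL b))
         \<le> card VL * racg_dist VG EG (racg_class VG EG a) (racg_class VG EG b)"
proof -
  obtain w where w: "w \<in> lists VG" "length w = racg_dist VG EG (racg_class VG EG a) (racg_class VG EG b)"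
    "racg_rel VG EG (a @ w) b" using dist_wit[OF a b] by blast
  have r: "racg_rel VL EL (Phi f VL a @ Phi f VL w) (Phi f VL b)" using Phi_rel[OF w(3)] by simp
  have "racg_dist VL EL (racg_class VL EL (Phi f VL a)) (racg_class VL EL (Phi f VL b))
        \<le> length (Phi f VL w)" using dist_le[OF Phi_lists r Phi_lists Phi_lists] .
  also have "\<dots> \<le> card VL * length w" using Phi_len[OF w(1)] by simp
  finally show ?thesis using w(2) by simp
qed

lemma dist_lower:
  assumes a: "a \<in> lists VG" and b: "b \<in> lists VG"
  shows "racg_dist VG EG (racg_class VG EG a) (racg_class VG EG b)
         \<le> racg_dist VL EL (racg_class VL EL (Phi f VL a)) (racg_class VL EL (Phi f VL b))"
proof -
  obtain w' where w': "w' \<in> lists VL"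
    "length w' = racg_dist VL EL (racg_class VL EL (Phi f VL a)) (racg_class VL EL (Phi f VL b))"
    "racg_rel VL EL (Phi f VL a @ w') (Phi f VL b)" using dist_wit[OF Phi_lists Phi_lists] by blast
  have x: "rev a @ b \<in> lists VG" using a b by auto
  obtain c where c: "c \<in> lists VG" "racg_rel VG EG (rev a @ b) c" "pp EG c"
    using min_pp[OF x] by blast
  have r1: "racg_rel VG EG (rev a @ a) []" using rel_inv[of "rev a" VG EG] a by auto
  have s1: "racg_rel VL EL (Phi f VL c) (Phi f VL (rev a) @ Phi f VL b)"
    using Phi_rel[OF rel_sym[OF c(2)]] by simp
  have s2: "racg_rel VL EL (Phi f VL (rev a) @ Phi f VL b) (Phi f VL (rev a) @ Phi f VL a @ w')"
    using rel_ctx[OF rel_sym[OF w'(3)], of "Phi f VL (rev a)" "[]"] by simp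
  have s3: "racg_rel VL EL (Phi f VL (rev a) @ Phi f VL a @ w') w'"
    using rel_ctx[OF Phi_rel[OF r1], of "[]" w'] by simp
  have "racg_rel VL EL w' (Phi f VL c)"
    using rel_sym[OF rel_trans[OF rel_trans[OF s1 s2] s3]] .
  then have l1: "length (Phi f VL c) \<le> length w'"
    using length_LB[OF symL _ pp_Phi[OF c(1) c(3)]] by blast
  have t1: "racg_rel VG EG (a @ c) (a @ rev a @ b)"
    using rel_ctx[OF rel_sym[OF c(2)], of a "[]"] by simp
  have t2: "racg_rel VG EG (a @ rev a @ b) b"
    using rel_ctx[OF rel_inv[of a VG EG], of "[]" b] a by auto
  have "racg_dist VG EG (racg_class VG EG a) (racg_class VG EG b) \<le> length c"
    using dist_le[OF c(1) rel_trans[OF t1 t2] a b] .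
  also have "\<dots> \<le> length (Phi f VL c)" using Phi_len[OF c(1)] by simp
  finally show ?thesis using l1 w'(2) by simp
qed

end

theorem proposition6p2:
  fixes VL :: "'b set" and EL :: "'b \<Rightarrow> 'b \<Rightarrow> bool"
    and VG :: "'a set" and EG :: "'a \<Rightarrow> 'a \<Rightarrow> bool"
    and f :: "'b \<Rightarrow> 'a"
  assumes "simple_graph VL EL" and "simple_graph VG EG"
    and surj: "f ` VL = VG"
    and full: "\<forall>u1 u2. EG u1 u2 \<longrightarrow>
                 (\<forall>v1\<in>VL. \<forall>v2\<in>VL. f v1 = u1 \<longrightarrow> f v2 = u2 \<longrightarrow> EL v1 v2)"
    and star: "\<forall>u\<in>VG. \<forall>u'\<in>VG. u \<noteq> u' \<and> \<not> EG u u' \<longrightarrow>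
                 (\<forall>v\<in>VL. f v = u \<longrightarrow> (\<exists>v'\<in>VL. f v' = u' \<and> \<not> EL v v'))"
    and cliques: "\<forall>u\<in>VG. is_clique VL EL {v \<in> VL. f v = u}"
  shows "\<exists>\<phi>. \<phi> \<in> hom (RACG VG EG) (RACG VL EL)
          \<and> (\<forall>u\<in>VG. \<phi> (racg_gen VG EG u) = racg_class VL EL (fibre_word f VL u))
          \<and> inj_on \<phi> (carrier (RACG VG EG))
          \<and> (\<exists>K C::real. K \<ge> 1 \<and> C \<ge> 0 \<and>
               (\<forall>g\<in>carrier (RACG VG EG). \<forall>h\<in>carrier (RACG VG EG).
                  real (racg_dist VG EG g h) / K - C \<le> real (racg_dist VL EL (\<phi> g) (\<phi> h))
                \<and> real (racg_dist VL EL (\<phi> g) (\<phi> h)) \<le> K * real (racg_dist VG EG g h) + C))"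
proof -
  define phi where "phi = (\<lambda>A. racg_class VL EL (Phi f VL (SOME w. w \<in> lists VG \<and> A = racg_class VG EG w)))"
  have phi_cls: "phi (racg_class VG EG w) = racg_class VL EL (Phi f VL w)" if w: "w \<in> lists VG" for w
  proof -
    have ex: "\<exists>w'. w' \<in> lists VG \<and> racg_class VG EG w = racg_class VG EG w'" using w by blast
    define w' where "w' = (SOME w'. w' \<in> lists VG \<and> racg_class VG EG w = racg_class VG EG w')"
    have w': "w' \<in> lists VG" "racg_class VG EG w = racg_class VG EG w'"
      using someI_ex[OF ex] unfolding w'_def by blast+
    have "racg_rel VG EG w w'" using cls_eq_iff[OF w] w'(2) by blast
    then have "racg_class VL EL (Phi f VL w') = racg_class VL EL (Phi f VL w)"
      using cls_eq[OF Phi_rel[OF assms, of w w']] by simp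
    then show ?thesis unfolding phi_def w'_def by simp
  qed
  have hom: "phi \<in> hom (RACG VG EG) (RACG VL EL)"
  proof (rule homI)
    fix x assume "x \<in> carrier (RACG VG EG)"
    then obtain a where a: "a \<in> lists VG" "x = racg_class VG EG a" by (auto simp: carrier_RACG)
    then show "phi x \<in> carrier (RACG VL EL)"
      using phi_cls[OF a(1)] Phi_lists[OF assms] by (auto simp: carrier_RACG)
  next
    fix x y assume "x \<in> carrier (RACG VG EG)" "y \<in> carrier (RACG VG EG)"
    then obtain a b where a: "a \<in> lists VG" "x = racg_class VG EG a"
      and b: "b \<in> lists VG" "y = racg_class VG EG b" by (auto simp: carrier_RACG)
    have "phi (x \<otimes>\<^bsub>RACG VG EG\<^esub> y) = phi (racg_class VG EG (a @ b))"
      using mult_cls[OF a(1) b(1)] a b by simp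
    also have "\<dots> = racg_class VL EL (Phi f VL a @ Phi f VL b)"
      using phi_cls[of "a @ b"] a b by simp
    also have "\<dots> = phi x \<otimes>\<^bsub>RACG VL EL\<^esub> phi y"
      using mult_cls[OF Phi_lists[OF assms] Phi_lists[OF assms]] phi_cls a b by simp
    finally show "phi (x \<otimes>\<^bsub>RACG VG EG\<^esub> y) = phi x \<otimes>\<^bsub>RACG VL EL\<^esub> phi y" .
  qed
  have gen: "\<forall>u\<in>VG. phi (racg_gen VG EG u) = racg_class VL EL (fibre_word f VL u)"
    using phi_cls by (simp add: racg_gen_def Phi_Cons)
  have inj: "inj_on phi (carrier (RACG VG EG))"
  proof (rule inj_onI)
    fix x y assume "x \<in> carrier (RACG VG EG)" "y \<in> carrier (RACG VG EG)" and e: "phi x = phi y"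
    then obtain a b where a: "a \<in> lists VG" "x = racg_class VG EG a"
      and b: "b \<in> lists VG" "y = racg_class VG EG b" by (auto simp: carrier_RACG)
    have e2: "racg_class VL EL (Phi f VL a) = racg_class VL EL (Phi f VL b)"
      using e phi_cls a b by simp
    have "racg_dist VL EL (racg_class VL EL (Phi f VL a)) (racg_class VL EL (Phi f VL a)) \<le> length ([] :: 'b list)"
      using dist_le[of "[]" VL EL "Phi f VL a" "Phi f VL a"] Phi_lists[OF assms] by simp
    then have "racg_dist VG EG (racg_class VG EG a) (racg_class VG EG b) = 0"
      using dist_lower[OF assms a(1) b(1)] e2 by simp
    then obtain w where "w \<in> lists VG" "length w = 0" "racg_rel VG EG (a @ w) b"
      using dist_wit[OF a(1) b(1), of EG] by auto
    then have "racg_rel VG EG a b" by simp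
    then show "x = y" using a b cls_eq by metis
  qed
  have qi: "\<forall>g\<in>carrier (RACG VG EG). \<forall>h\<in>carrier (RACG VG EG).
                  real (racg_dist VG EG g h) / (real (card VL) + 1) - 0 \<le> real (racg_dist VL EL (phi g) (phi h))
                \<and> real (racg_dist VL EL (phi g) (phi h)) \<le> (real (card VL) + 1) * real (racg_dist VG EG g h) + 0"
  proof (intro ballI)
    fix g h assume "g \<in> carrier (RACG VG EG)" "h \<in> carrier (RACG VG EG)"
    then obtain a b where a: "a \<in> lists VG" "g = racg_class VG EG a"
      and b: "b \<in> lists VG" "h = racg_class VG EG b" by (auto simp: carrier_RACG)
    define dG where "dG = racg_dist VG EG g h"
    define dL where "dL = racg_dist VL EL (phi g) (phi h)"
    have lo: "dG \<le> dL" using dist_lower[OF assms a(1) b(1)] a b phi_cls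
      unfolding dG_def dL_def by simp
    have up: "dL \<le> card VL * dG" using dist_upper[OF assms a(1) b(1)] a b phi_cls
      unfolding dG_def dL_def by simp
    have K: "real (card VL) + 1 \<ge> 1" by simp
    have "real dG / (real (card VL) + 1) \<le> real dG"
      using K by (simp add: divide_le_eq mult_le_cancel_left1)
    also have "\<dots> \<le> real dL" using lo by simp
    finally have 1: "real dG / (real (card VL) + 1) - 0 \<le> real dL" by simp
    have "real dL \<le> real (card VL) * real dG" using up by (metis of_nat_le_iff of_nat_mult)
    also have "\<dots> \<le> (real (card VL) + 1) * real dG" by (simp add: distrib_right)
    finally have 2: "real dL \<le> (real (card VL) + 1) * real dG + 0" by simp
    show "real (racg_dist VG EG g h) / (real (card VL) + 1) - 0 \<le> real (racg_dist VL EL (phi g) (phi h))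
                \<and> real (racg_dist VL EL (phi g) (phi h)) \<le> (real (card VL) + 1) * real (racg_dist VG EG g h) + 0"
      using 1 2 unfolding dG_def dL_def by simp
  qed
  show ?thesis
    apply (rule exI[of _ phi])
    using hom gen inj qi
    apply (intro conjI)
       apply blast
      apply blast
     apply blast
    apply (rule exI[of _ "real (card VL) + 1"], rule exI[of _ 0])
    apply simp
    done
qed

end
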